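(* For each $n\in\mathbf{N}$ let $W_n = (w_{ij}^{(n)})_{i,j=1}^n$ be a random $n\times n$ Hermitian matrix whose upper triangular entries are jointly independent with mean zero, and assume: there are $\eta_n>0$ with $\eta_n\to0$ and $|w_{ij}^{(n)}|\le\eta_n$ for all $n,i,j$; there is a finite $C\ge0$ with $\sum_{j=1}^n \operatorname{Var}[w_{ij}^{(n)}]\le C$ for all $n$ and $i$; and \[ \lim_{n\to\infty} \frac{1}{n}\sum_{i=1}^n \biggl| \sum_{j=1}^n \Bigl( \operatorname{Var}\bigl[w_{ij}^{(n)}\bigr] - \frac{1}{n} \Bigr) \biggr| = 0. \] Then for any finite tree $T$, \[ \lim_{n\to\infty} \frac{1}{n} \sum_{F \in I(T,n)} P(T,F) = 1. \]
   Context: Graphs are undirected, may have loops, and have no multiple edges. For a finite graph $G$ and $n\in\mathbf{N}$, $I(G,n)$ is the set of injections $V(G)\to\{1,\ldots,n\}$. For $F\in I(G,n)$, $P(G,F) := \prod_{e\in E(G)} \operatorname{Var}\bigl[w^{(n)}_{F(u_e)F(v_e)}\bigr]$, where $u_e,v_e$ are the ends of $e$; the empty product is $1$. $\operatorname{Var}[w]=\mathbf{E}|w-\mathbf{E}w|^2$. *)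

theory Defs
  imports "HOL-Probability.Probability"
begin

text \<open>A graph is a pair (V, E) with V a finite vertex set and E a set of edges,
  each edge being a set {u, v} of its ends (a loop is {u, u} = {u}).\<close>

definition graph :: "'v set \<Rightarrow> 'v set set \<Rightarrow> bool" where
  "graph V E \<longleftrightarrow> finite V \<and> (\<forall>e\<in>E. \<exists>u\<in>V. \<exists>v\<in>V. e = {u, v})"

definition graph_connected :: "'v set \<Rightarrow> 'v set set \<Rightarrow> bool" where
  "graph_connected V E \<longleftrightarrow>
     (\<forall>u\<in>V. \<forall>v\<in>V. (u, v) \<in> {(x, y). {x, y} \<in> E}\<^sup>*)"

definition has_loop :: "'v set set \<Rightarrow> bool" where
  "has_loop E \<longleftrightarrow> (\<exists>u. {u} \<in> E)"

definition is_cycle :: "'v set \<Rightarrow> 'v set set \<Rightarrow> 'v list \<Rightarrow> bool" where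
  "is_cycle V E vs \<longleftrightarrow> distinct vs \<and> length vs \<ge> 3 \<and> set vs \<subseteq> V \<and>
     (\<forall>i<length vs. {vs ! i, vs ! ((i + 1) mod length vs)} \<in> E)"

definition is_tree :: "'v set \<Rightarrow> 'v set set \<Rightarrow> bool" where
  "is_tree V E \<longleftrightarrow> graph V E \<and> V \<noteq> {} \<and> graph_connected V E \<and>
     \<not> has_loop E \<and> (\<nexists>vs. is_cycle V E vs)"

definition injs :: "'v set \<Rightarrow> nat \<Rightarrow> ('v \<Rightarrow> nat) set" where
  "injs V n = {F. F \<in> V \<rightarrow>\<^sub>E {1..n} \<and> inj_on F V}"

definition end1 :: "'v set \<Rightarrow> 'v" where "end1 e = (SOME u. u \<in> e)"
definition end2 :: "'v set \<Rightarrow> 'v" where "end2 e = (SOME v. e = {end1 e, v})"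

definition cvar :: "'a measure \<Rightarrow> ('a \<Rightarrow> complex) \<Rightarrow> real" where
  "cvar M X = (\<integral>x. (cmod (X x - (\<integral>y. X y \<partial>M)))\<^sup>2 \<partial>M)"

text \<open>P(G,F) for the variance profile s i j = Var[w_ij].\<close>
definition Pw :: "'v set set \<Rightarrow> (nat \<Rightarrow> nat \<Rightarrow> real) \<Rightarrow> ('v \<Rightarrow> nat) \<Rightarrow> real" where
  "Pw E s F = (\<Prod>e\<in>E. s (F (end1 e)) (F (end2 e)))"

end

theory Submission
  imports Defs
begin



inductive tr :: "'v set \<Rightarrow> 'v set set \<Rightarrow> bool" where
  tr_single: "tr {r} {}"
| tr_add: "tr V E \<Longrightarrow> p \<in> V \<Longrightarrow> l \<notin> V \<Longrightarrow> tr (insert l V) (insert {p,l} E)"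

lemma tr_props: "tr V E \<Longrightarrow> finite V \<and> finite E \<and> V \<noteq> {} \<and> (\<forall>e\<in>E. \<exists>a b. e = {a,b} \<and> a \<in> V \<and> b \<in> V)"
proof (induction rule: tr.induct)
  case (tr_single r) show ?case by simp
next
  case (tr_add V E p l)
  have "\<forall>e\<in>insert {p,l} E. \<exists>a b. e = {a,b} \<and> a \<in> insert l V \<and> b \<in> insert l V"
    using tr_add by blast
  then show ?case using tr_add by simp
qed

lemma ends: assumes "e = {a,b}" shows "{end1 e, end2 e} = {a,b}"
proof -
  have 1: "end1 e \<in> e" unfolding end1_def using assms by (metis insertI1 someI_ex)
  have "\<exists>v. e = {end1 e, v}" using 1 assms by auto
  then have "e = {end1 e, end2 e}" unfolding end2_def by (rule someI_ex)
  then show ?thesis using assms by simp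
qed

definition ispath :: "'v set set \<Rightarrow> 'v list \<Rightarrow> bool" where
  "ispath E xs \<longleftrightarrow> distinct xs \<and> (\<forall>i. Suc i < length xs \<longrightarrow> {xs!i, xs!Suc i} \<in> E)"



lemma leaf_exists:
  assumes T: "is_tree V E" and c: "2 \<le> card V"
  shows "\<exists>l p. l \<in> V \<and> p \<in> V \<and> p \<noteq> l \<and> {p,l} \<in> E \<and> (\<forall>e\<in>E. l \<in> e \<longrightarrow> e = {p,l})"
proof -
  have fin: "finite V" and gr: "\<forall>e\<in>E. \<exists>u\<in>V. \<exists>v\<in>V. e = {u, v}"
    and con: "graph_connected V E" and nl: "\<not> has_loop E" and nc: "\<nexists>vs. is_cycle V E vs"
    using T unfolding is_tree_def graph_def by blast+
  have "V \<noteq> {}" using c by auto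
  then obtain a where a: "a \<in> V" by blast
  have "card (V - {a}) \<ge> 1" using c a fin by simp
  then have "V - {a} \<noteq> {}" by (metis card.empty not_one_le_zero)
  then obtain b where b: "b \<in> V" "b \<noteq> a" by auto
  have "(a, b) \<in> {(x, y). {x, y} \<in> E}\<^sup>*" using con a b unfolding graph_connected_def by auto
  then obtain y where y: "{a, y} \<in> E" using b(2) by (metis (no_types, lifting) case_prodD converse_rtranclE mem_Collect_eq)
  have ya: "y \<noteq> a" using y nl unfolding has_loop_def by auto
  have yV: "y \<in> V" using gr y by (metis doubleton_eq_iff)
  define P where "P = (\<lambda>xs. ispath E xs \<and> set xs \<subseteq> V \<and> 2 \<le> length xs)"
  have P0: "P [a, y]" unfolding P_def ispath_def using ya y a yV
    by (auto simp: less_Suc_eq nth_Cons')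
  have bnd: "\<forall>y. (\<exists>xs. P xs \<and> length xs = y) \<longrightarrow> y \<le> card V"
  proof (intro allI impI)
    fix y assume "\<exists>xs. P xs \<and> length xs = y"
    then obtain xs where "P xs" "length xs = y" by blast
    then have "distinct xs" "set xs \<subseteq> V" "length xs = y" unfolding P_def ispath_def by auto
    then show "y \<le> card V" using distinct_card[of xs] card_mono[OF fin] by metis
  qed
  have "\<exists>x. (\<exists>xs. P xs \<and> length xs = x) \<and> (\<forall>y. (\<exists>xs. P xs \<and> length xs = y) \<longrightarrow> y \<le> x)"
    by (rule Nat.ex_has_greatest_nat[of _ 2 "card V"]) (use P0 bnd in auto)
  then obtain xs where xs: "P xs" and mx0: "\<forall>y. (\<exists>xs. P xs \<and> length xs = y) \<longrightarrow> y \<le> length xs"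
    by blast
  have mx: "\<And>ys. P ys \<Longrightarrow> length ys \<le> length xs" using mx0 by blast
  define m where "m = length xs"
  have m2: "2 \<le> m" and dis: "distinct xs" and sV: "set xs \<subseteq> V"
    and pe: "\<And>i. Suc i < m \<Longrightarrow> {xs!i, xs!Suc i} \<in> E"
    using xs unfolding P_def ispath_def m_def by auto
  define l where "l = xs ! (m - 1)"
  define p where "p = xs ! (m - 2)"
  have lV: "l \<in> V" and pV: "p \<in> V" using sV m2 unfolding l_def p_def m_def by auto
  have pl: "p \<noteq> l" using dis m2 unfolding l_def p_def m_def by (simp add: nth_eq_iff_index_eq)
  have "Suc (m-2) = m-1" "Suc (m-2) < m" using m2 by auto
  then have plE: "{p, l} \<in> E" using pe[of "m-2"] unfolding p_def l_def by simp
  have "\<forall>e\<in>E. l \<in> e \<longrightarrow> e = {p,l}"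
  proof (intro ballI impI)
    fix e assume eE: "e \<in> E" and le: "l \<in> e"
    obtain u v where uv: "u \<in> V" "v \<in> V" "e = {u,v}" using gr eE by blast
    have "\<exists>z\<in>V. e = {l, z}"
    proof (cases "l = u")
      case True then show ?thesis using uv by blast
    next
      case False then have "l = v" using le uv by blast
      then show ?thesis using uv by (metis insert_commute)
    qed
    then obtain z where ez: "e = {l, z}" and zV: "z \<in> V" by blast
    have zl: "z \<noteq> l" using nl eE ez unfolding has_loop_def by auto
    show "e = {p, l}"
    proof (cases "z \<in> set xs")
      case False
      have "P (xs @ [z])" unfolding P_def ispath_def
      proof (intro conjI allI impI)
        show "distinct (xs @ [z])" using dis False by simp
        show "set (xs @ [z]) \<subseteq> V" using sV zV by simp
        show "2 \<le> length (xs @ [z])" using m2 m_def by simp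
        fix i assume i: "Suc i < length (xs @ [z])"
        show "{(xs @ [z]) ! i, (xs @ [z]) ! Suc i} \<in> E"
        proof (cases "Suc i < m")
          case True then show ?thesis using pe[of i] by (simp add: nth_append m_def)
        next
          case False
          then have im: "i = m - 1" using i m_def by simp
          then have "(xs @ [z]) ! i = l" "(xs @ [z]) ! Suc i = z" using m2 unfolding l_def m_def
            by (auto simp: nth_append)
          then show ?thesis using eE ez by simp
        qed
      qed
      then show ?thesis using mx[of "xs @ [z]"] m_def by simp
    next
      case True
      then obtain j where j: "j < m" "xs ! j = z" unfolding m_def by (metis in_set_conv_nth)
      have jm1: "j \<noteq> m - 1" using zl j l_def by auto
      show ?thesis
      proof (cases "j = m - 2")
        case True then show ?thesis using ez j p_def by auto
      next
        case False
        then have jlt: "j + 3 \<le> m" using jm1 j by linarith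
        define vs where "vs = drop j xs"
        have lvs: "length vs = m - j" unfolding vs_def m_def by simp
        have "is_cycle V E vs" unfolding is_cycle_def
        proof (intro conjI allI impI)
          show "distinct vs" using dis vs_def by simp
          show "3 \<le> length vs" using lvs jlt by simp
          show "set vs \<subseteq> V" using sV vs_def by (meson order_trans set_drop_subset)
          fix i assume i: "i < length vs"
          show "{vs ! i, vs ! ((i + 1) mod length vs)} \<in> E"
          proof (cases "Suc i < length vs")
            case True
            then have "(i + 1) mod length vs = Suc i" by simp
            then show ?thesis using pe[of "j + i"] True lvs unfolding vs_def m_def by simp
          next
            case False
            then have ii: "i = m - j - 1" using i lvs by simp
            then have "i + 1 = length vs" using lvs jlt by simp
            then have "(i + 1) mod length vs = 0" by simp
            moreover have "vs ! i = l" using ii jlt unfolding vs_def l_def m_def by simp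
            moreover have "vs ! 0 = z" using j jlt unfolding vs_def m_def by simp
            ultimately show ?thesis using eE ez by simp
          qed
        qed
        then show ?thesis using nc by blast
      qed
    qed
  qed
  then show ?thesis using lV pV pl plE by blast
qed



lemma remove_leaf:
  assumes T: "is_tree V E" and lV: "l \<in> V" and pV: "p \<in> V" and pl: "p \<noteq> l"
    and lf: "\<forall>e\<in>E. l \<in> e \<longrightarrow> e = {p,l}"
  shows "is_tree (V - {l}) (E - {{p,l}})"
proof -
  have fin: "finite V" and gr: "\<forall>e\<in>E. \<exists>u\<in>V. \<exists>v\<in>V. e = {u, v}"
    and con: "graph_connected V E" and nl: "\<not> has_loop E" and nc: "\<nexists>vs. is_cycle V E vs"
    using T unfolding is_tree_def graph_def by blast+
  have g: "graph (V - {l}) (E - {{p,l}})" unfolding graph_def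
  proof (intro conjI ballI)
    show "finite (V - {l})" using fin by simp
    fix e assume e: "e \<in> E - {{p,l}}"
    then have "l \<notin> e" using lf by auto
    then show "\<exists>u\<in>V - {l}. \<exists>v\<in>V - {l}. e = {u, v}" using gr e by auto
  qed
  let ?R = "{(x, y). {x, y} \<in> E}" and ?R' = "{(x, y). {x, y} \<in> E - {{p,l}}}"
  have key: "(u, y) \<in> ?R\<^sup>* \<Longrightarrow> u \<noteq> l \<Longrightarrow> (y \<noteq> l \<longrightarrow> (u, y) \<in> ?R'\<^sup>*) \<and> (y = l \<longrightarrow> (u, p) \<in> ?R'\<^sup>*)" for u y
  proof (induction rule: rtrancl_induct)
    case base then show ?case by simp
  next
    case (step y z)
    then have yz: "{y, z} \<in> E" by simp
    show ?case
    proof (cases "z = l")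
      case False
      show ?thesis
      proof (cases "y = l")
        case True
        then have "{y,z} = {p,l}" using lf yz by auto
        then have "z = p" using False True pl by (auto simp: doubleton_eq_iff)
        then show ?thesis using step True False by simp
      next
        case False
        then have "{y,z} \<noteq> {p,l}" using \<open>z \<noteq> l\<close> by auto
        then have "(y, z) \<in> ?R'" using yz by simp
        then show ?thesis using step False \<open>z \<noteq> l\<close> by (meson rtrancl.rtrancl_into_rtrancl)
      qed
    next
      case True
      show ?thesis
      proof (cases "y = l")
        case True then show ?thesis using step \<open>z = l\<close> by simp
      next
        case False
        then have "{y,z} = {p,l}" using lf yz True by auto
        then have "y = p" using False True pl by (auto simp: doubleton_eq_iff)
        then show ?thesis using step True False by simp
      qed
    qed
  qed
  have c: "graph_connected (V - {l}) (E - {{p,l}})" unfolding graph_connected_def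
  proof (intro ballI)
    fix u v assume u: "u \<in> V - {l}" and v: "v \<in> V - {l}"
    then have "(u, v) \<in> ?R\<^sup>*" using con unfolding graph_connected_def by auto
    then show "(u, v) \<in> ?R'\<^sup>*" using key u v by auto
  qed
  have "\<not> has_loop (E - {{p,l}})" using nl unfolding has_loop_def by auto
  moreover have "\<nexists>vs. is_cycle (V - {l}) (E - {{p,l}}) vs"
    using nc unfolding is_cycle_def by blast
  moreover have "V - {l} \<noteq> {}" using pV pl by auto
  ultimately show ?thesis using g c unfolding is_tree_def by auto
qed



lemma tree_to_tr: "is_tree V E \<Longrightarrow> tr V E"
proof (induction "card V" arbitrary: V E rule: less_induct)
  case less
  have fin: "finite V" and ne: "V \<noteq> {}" and gr: "\<forall>e\<in>E. \<exists>u\<in>V. \<exists>v\<in>V. e = {u, v}"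
    and nl: "\<not> has_loop E"
    using less.prems unfolding is_tree_def graph_def by blast+
  show ?case
  proof (cases "card V = 1")
    case True
    then obtain r where r: "V = {r}" by (meson card_1_singletonE)
    have "E = {}"
    proof (rule ccontr)
      assume "E \<noteq> {}"
      then obtain e where "e \<in> E" by auto
      then have "{r} \<in> E" using gr r by auto
      then show False using nl unfolding has_loop_def by auto
    qed
    then show ?thesis using r tr_single by simp
  next
    case False
    then have "2 \<le> card V" using fin ne by (metis One_nat_def Suc_1 Suc_leI card_gt_0_iff le_neq_implies_less)
    then obtain l p where lp: "l \<in> V" "p \<in> V" "p \<noteq> l" "{p,l} \<in> E" "\<forall>e\<in>E. l \<in> e \<longrightarrow> e = {p,l}"
      using leaf_exists[OF less.prems] by blast
    have "is_tree (V - {l}) (E - {{p,l}})" using remove_leaf[OF less.prems lp(1,2,3,5)] .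
    moreover have "card (V - {l}) < card V" using lp fin by (meson card_Diff1_less)
    ultimately have "tr (V - {l}) (E - {{p,l}})" using less.hyps by blast
    then have "tr (insert l (V - {l})) (insert {p,l} (E - {{p,l}}))"
      using tr_add[of "V - {l}" "E - {{p,l}}" p l] lp(2,3) by blast
    moreover have "insert l (V - {l}) = V" using lp(1) by blast
    moreover have "insert {p,l} (E - {{p,l}}) = E" using lp(4) by blast
    ultimately show ?thesis by simp
  qed
qed




lemma sum_PiE_insert:
  assumes "l \<notin> V"
  shows "(\<Sum>F\<in>PiE (insert l V) (\<lambda>_. A). h F) = (\<Sum>g\<in>PiE V (\<lambda>_. A). \<Sum>k\<in>A. h (g(l:=k)))"
proof -
  have "(\<Sum>F\<in>PiE (insert l V) (\<lambda>_. A). h F) = (\<Sum>x\<in>A \<times> PiE V (\<lambda>_. A). h ((\<lambda>(y, g). g(l := y)) x))"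
    unfolding PiE_insert_eq[of l V "\<lambda>_. A"]
    by (rule sum.reindex[unfolded comp_def]) (use inj_combinator[OF assms, of "\<lambda>_. A"] in simp)
  also have "\<dots> = (\<Sum>k\<in>A. \<Sum>g\<in>PiE V (\<lambda>_. A). h (g(l:=k)))"
    by (simp add: sum.cartesian_product case_prod_beta)
  also have "\<dots> = (\<Sum>g\<in>PiE V (\<lambda>_. A). \<Sum>k\<in>A. h (g(l:=k)))" by (rule sum.swap)
  finally show ?thesis .
qed

definition wt :: "(nat \<Rightarrow> nat \<Rightarrow> nat \<Rightarrow> real) \<Rightarrow> nat \<Rightarrow> 'v set set \<Rightarrow> ('v \<Rightarrow> nat) \<Rightarrow> real" where
  "wt s n E F = (\<Prod>e\<in>E. s n (F (end1 e)) (F (end2 e)))"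

definition tc :: "(nat \<Rightarrow> nat \<Rightarrow> nat \<Rightarrow> real) \<Rightarrow> nat \<Rightarrow> 'v set \<Rightarrow> 'v set set \<Rightarrow> (('v \<Rightarrow> nat) \<Rightarrow> real)
   \<Rightarrow> ('v \<Rightarrow> nat \<Rightarrow> real) \<Rightarrow> real" where
  "tc s n V E chi \<phi> = (\<Sum>F\<in>PiE V (\<lambda>_. {1..n}). chi F * wt s n E F * (\<Prod>u\<in>V. \<phi> u (F u)))"

definition psi :: "(nat \<Rightarrow> nat \<Rightarrow> nat \<Rightarrow> real) \<Rightarrow> nat \<Rightarrow> (nat \<Rightarrow> real) \<Rightarrow> nat \<Rightarrow> real" where
  "psi s n f j = (\<Sum>k=1..n. s n j k * f k)"

definition L1 :: "(nat \<Rightarrow> nat \<Rightarrow> real) \<Rightarrow> nat \<Rightarrow> real" where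
  "L1 f n = (1 / real n) * (\<Sum>i=1..n. \<bar>f n i - 1\<bar>)"

lemma ends_mem: assumes "e = {a,b}" shows "end1 e \<in> e" "end2 e \<in> e"
  using ends[OF assms] assms by auto

locale prof =
  fixes s :: "nat \<Rightarrow> nat \<Rightarrow> nat \<Rightarrow> real" and C :: real and \<epsilon> :: "nat \<Rightarrow> real"
  assumes s_nonneg: "\<And>n i j. i \<in> {1..n} \<Longrightarrow> j \<in> {1..n} \<Longrightarrow> 0 \<le> s n i j"
  and s_sym: "\<And>n i j. i \<in> {1..n} \<Longrightarrow> j \<in> {1..n} \<Longrightarrow> s n i j = s n j i"
  and s_row: "\<And>n i. i \<in> {1..n} \<Longrightarrow> (\<Sum>j=1..n. s n i j) \<le> C"
  and s_small: "\<And>n i j. i \<in> {1..n} \<Longrightarrow> j \<in> {1..n} \<Longrightarrow> s n i j \<le> \<epsilon> n"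
  and C_nonneg: "0 \<le> C"
  and eps_nonneg: "\<And>n. 0 \<le> \<epsilon> n"
  and prof: "(\<lambda>n. (1/real n) * (\<Sum>i=1..n. \<bar>(\<Sum>j=1..n. s n i j) - 1\<bar>)) \<longlonglongrightarrow> 0"
begin

lemma wt_nonneg:
  assumes "tr V E" "F \<in> PiE V (\<lambda>_. {1..n})"
  shows "0 \<le> wt s n E F"
proof -
  have "\<forall>e\<in>E. \<exists>a b. e = {a,b} \<and> a \<in> V \<and> b \<in> V" using tr_props[OF assms(1)] by blast
  then have "\<forall>e\<in>E. end1 e \<in> V \<and> end2 e \<in> V" by (metis ends_mem insertE singletonD)
  then show ?thesis unfolding wt_def using assms(2)
    by (intro prod_nonneg) (auto intro!: s_nonneg simp: PiE_def Pi_def)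
qed

lemma tc_nonneg:
  assumes "tr V E" "\<And>F. 0 \<le> chi F" "\<And>u i. i \<in> {1..n} \<Longrightarrow> 0 \<le> \<phi> u i"
  shows "0 \<le> tc s n V E chi \<phi>"
  unfolding tc_def
proof (intro sum_nonneg mult_nonneg_nonneg prod_nonneg)
  fix F assume F: "F \<in> PiE V (\<lambda>_. {1..n})"
  show "0 \<le> chi F" by (rule assms(2))
  show "0 \<le> wt s n E F" by (rule wt_nonneg[OF assms(1) F])
  fix u assume "u \<in> V"
  then show "0 \<le> \<phi> u (F u)" using assms(3)[OF PiE_mem[OF F]] by blast
qed

lemma decomp:
  assumes T: "tr V E" and pV: "p \<in> V" and lV: "l \<notin> V"
  shows "tc s n (insert l V) (insert {p,l} E) chi \<phi> =
    (\<Sum>g\<in>PiE V (\<lambda>_. {1..n}). \<Sum>k=1..n. chi (g(l:=k)) * s n (g p) k * \<phi> l k * (wt s n E g * (\<Prod>u\<in>V. \<phi> u (g u))))"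
proof -
  have fin: "finite V" "finite E" and eV: "\<forall>e\<in>E. \<exists>a b. e = {a,b} \<and> a \<in> V \<and> b \<in> V"
    using tr_props[OF T] by auto
  have plE: "{p,l} \<notin> E" using eV lV by (metis doubleton_eq_iff)
  have pl: "p \<noteq> l" using pV lV by auto
  show ?thesis unfolding tc_def
    apply (subst sum_PiE_insert[OF lV])
  proof (intro sum.cong refl)
    fix g k assume g: "g \<in> PiE V (\<lambda>_. {1..n})" and k: "k \<in> {1..n}"
    have gp: "g p \<in> {1..n}" using g pV by auto
    have w1: "wt s n E (g(l:=k)) = wt s n E g" unfolding wt_def
    proof (intro prod.cong refl)
      fix e assume "e \<in> E"
      then obtain a b where "e = {a,b}" "a \<in> V" "b \<in> V" using eV by blast
      then have "end1 e \<in> {a,b}" "end2 e \<in> {a,b}" using ends_mem by metis+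
      then have "end1 e \<noteq> l" "end2 e \<noteq> l" using lV \<open>a \<in> V\<close> \<open>b \<in> V\<close> by auto
      then show "s n ((g(l := k)) (end1 e)) ((g(l := k)) (end2 e)) = s n (g (end1 e)) (g (end2 e))"
        by simp
    qed
    have e2: "{end1 {p,l}, end2 {p,l}} = {p,l}" by (rule ends) simp
    have w2: "s n ((g(l := k)) (end1 {p,l})) ((g(l := k)) (end2 {p,l})) = s n (g p) k"
    proof (cases "end1 {p,l} = p")
      case True
      then have "end2 {p,l} = l" using e2 pl by (metis doubleton_eq_iff)
      then show ?thesis using True pl by simp
    next
      case False
      then have "end1 {p,l} = l" "end2 {p,l} = p" using e2 pl by (metis doubleton_eq_iff)+
      then show ?thesis using pl s_sym[OF gp k] by simp
    qed
    have w: "wt s n (insert {p, l} E) (g(l := k)) = s n (g p) k * wt s n E g"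
      using w1 w2 plE fin unfolding wt_def by (simp add: prod.insert)
    have pr: "(\<Prod>u\<in>insert l V. \<phi> u ((g(l := k)) u)) = \<phi> l k * (\<Prod>u\<in>V. \<phi> u (g u))"
    proof -
      have "(\<Prod>u\<in>V. \<phi> u ((g(l := k)) u)) = (\<Prod>u\<in>V. \<phi> u (g u))"
        using lV by (intro prod.cong refl) auto
      then show ?thesis using fin lV by (simp add: prod.insert)
    qed
    show "chi (g(l := k)) * wt s n (insert {p, l} E) (g(l := k)) * (\<Prod>u\<in>insert l V. \<phi> u ((g(l := k)) u)) =
         chi (g(l := k)) * s n (g p) k * \<phi> l k * (wt s n E g * (\<Prod>u\<in>V. \<phi> u (g u)))"
      unfolding w pr by (simp add: algebra_simps)
  qed
qed

lemma tc_step: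
  assumes T: "tr V E" and pV: "p \<in> V" and lV: "l \<notin> V"
    and chi: "\<And>g k. chi (g(l:=k)) = chi' g"
  shows "tc s n (insert l V) (insert {p,l} E) chi \<phi> = tc s n V E chi' (\<phi>(p := (\<lambda>j. \<phi> p j * psi s n (\<phi> l) j)))"
proof -
  have fin: "finite V" using tr_props[OF T] by auto
  have per: "(\<Sum>k = 1..n. chi (g(l := k)) * s n (g p) k * \<phi> l k * (wt s n E g * (\<Prod>u\<in>V. \<phi> u (g u)))) =
         chi' g * wt s n E g * (\<Prod>u\<in>V. (\<phi>(p := \<lambda>j. \<phi> p j * psi s n (\<phi> l) j)) u (g u))" for g
  proof -
    have "(\<Prod>u\<in>V. (\<phi>(p := (\<lambda>j. \<phi> p j * psi s n (\<phi> l) j))) u (g u))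
        = \<phi> p (g p) * psi s n (\<phi> l) (g p) * (\<Prod>u\<in>V-{p}. \<phi> u (g u))"
      using fin pV by (simp add: prod.remove)
    also have "\<dots> = psi s n (\<phi> l) (g p) * (\<Prod>u\<in>V. \<phi> u (g u))"
      using fin pV by (simp add: prod.remove)
    finally have e: "(\<Prod>u\<in>V. (\<phi>(p := (\<lambda>j. \<phi> p j * psi s n (\<phi> l) j))) u (g u))
        = psi s n (\<phi> l) (g p) * (\<Prod>u\<in>V. \<phi> u (g u))" .
    let ?X = "wt s n E g * (\<Prod>u\<in>V. \<phi> u (g u))"
    have "(\<Sum>k = 1..n. chi (g(l := k)) * s n (g p) k * \<phi> l k * ?X)
        = (\<Sum>k = 1..n. (chi' g * ?X) * (s n (g p) k * \<phi> l k))" by (simp add: chi mult_ac)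
    also have "\<dots> = chi' g * ?X * psi s n (\<phi> l) (g p)" by (simp add: psi_def sum_distrib_left)
    also have "\<dots> = chi' g * wt s n E g * (\<Prod>u\<in>V. (\<phi>(p := \<lambda>j. \<phi> p j * psi s n (\<phi> l) j)) u (g u))"
      unfolding e by (simp add: mult_ac)
    finally show ?thesis .
  qed
  show ?thesis unfolding decomp[OF T pV lV] unfolding tc_def
    by (intro sum.cong refl) (rule per)
qed

lemma tc_single: "tc s n {r} {} chi \<phi> = (\<Sum>k=1..n. chi ((\<lambda>_. undefined)(r:=k)) * \<phi> r k)"
proof -
  have "tc s n {r} {} chi \<phi> = (\<Sum>F\<in>PiE (insert r {}) (\<lambda>_. {1..n}). chi F * wt s n {} F * (\<Prod>u\<in>{r}. \<phi> u (F u)))"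
    unfolding tc_def by simp
  also have "\<dots> = (\<Sum>k=1..n. chi ((\<lambda>_. undefined)(r:=k)) * \<phi> r k)"
    by (subst sum_PiE_insert) (auto simp: wt_def fun_upd_def)
  finally show ?thesis .
qed


lemma psi_bounds:
  assumes "0 \<le> K" "\<And>i. i \<in> {1..n} \<Longrightarrow> 0 \<le> f i \<and> f i \<le> K" "j \<in> {1..n}"
  shows "0 \<le> psi s n f j \<and> psi s n f j \<le> C * K"
proof
  show "0 \<le> psi s n f j" unfolding psi_def using assms s_nonneg by (intro sum_nonneg) auto
  have "psi s n f j \<le> (\<Sum>k=1..n. s n j k * K)" unfolding psi_def
    using assms s_nonneg by (intro sum_mono mult_left_mono) auto
  also have "\<dots> = K * (\<Sum>k=1..n. s n j k)" by (simp add: sum_distrib_left mult.commute)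
  also have "\<dots> \<le> K * C" using s_row[OF assms(3)] assms(1) by (simp add: mult_left_mono)
  finally show "psi s n f j \<le> C * K" by (simp add: mult.commute)
qed

lemma boundB:
  assumes "tr V E" and "0 \<le> K" and "\<And>u n i. i \<in> {1..n} \<Longrightarrow> 0 \<le> \<phi> u n i \<and> \<phi> u n i \<le> K"
  shows "\<exists>B. \<forall>n. tc s n V E (\<lambda>_. 1) (\<lambda>u. \<phi> u n) \<le> B * real n"
  using assms
proof (induction arbitrary: \<phi> K rule: tr.induct)
  case (tr_single r)
  have "tc s n {r} {} (\<lambda>_. 1) (\<lambda>u. \<phi> u n) \<le> K * real n" for n
  proof -
    have "tc s n {r} {} (\<lambda>_. 1) (\<lambda>u. \<phi> u n) = (\<Sum>k=1..n. \<phi> r n k)" by (simp add: tc_single)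
    also have "\<dots> \<le> of_nat (card {1..n}) * K" using tr_single.prems by (intro sum_bounded_above) auto
    finally show ?thesis by (simp add: mult.commute)
  qed
  then show ?case by blast
next
  case (tr_add V E p l)
  define \<phi>' where "\<phi>' u n j = (if u = p then \<phi> p n j * psi s n (\<phi> l n) j else \<phi> u n j)" for u n j
  have eq: "(\<lambda>u. \<phi>' u n) = (\<lambda>u. \<phi> u n)(p := \<lambda>j. \<phi> p n j * psi s n (\<phi> l n) j)" for n
    by (intro ext) (simp add: \<phi>'_def)
  have b': "0 \<le> \<phi>' u n i \<and> \<phi>' u n i \<le> K + K * (C * K)" if i: "i \<in> {1..n}" for u n i
  proof (cases "u = p")
    case True
    have ps: "0 \<le> psi s n (\<phi> l n) i \<and> psi s n (\<phi> l n) i \<le> C * K"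
      using psi_bounds[OF tr_add.prems(1)] tr_add.prems(2) i by blast
    have ph: "0 \<le> \<phi> p n i \<and> \<phi> p n i \<le> K" using tr_add.prems(2) i by blast
    have "\<phi> p n i * psi s n (\<phi> l n) i \<le> K * (C * K)" using ps ph by (intro mult_mono) auto
    then show ?thesis using True ps ph tr_add.prems(1) C_nonneg by (simp add: \<phi>'_def)
  next
    case False
    have kk: "0 \<le> K * (C * K)" using tr_add.prems(1) C_nonneg by simp
    then show ?thesis using tr_add.prems(2)[OF i, of u] False by (simp add: \<phi>'_def)
  qed
  have K': "0 \<le> K + K * (C * K)" using tr_add.prems(1) C_nonneg by simp
  have "\<exists>B. \<forall>n. tc s n V E (\<lambda>_. 1) (\<lambda>u. \<phi>' u n) \<le> B * real n"
    by (rule tr_add.IH[where K="K + K * (C * K)" and \<phi>=\<phi>']) (use K' b' in auto)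
  then obtain B where B: "\<And>n. tc s n V E (\<lambda>_. 1) (\<lambda>u. \<phi>' u n) \<le> B * real n" by blast
  have "tc s n (insert l V) (insert {p,l} E) (\<lambda>_. 1) (\<lambda>u. \<phi> u n) = tc s n V E (\<lambda>_. 1) (\<lambda>u. \<phi>' u n)" for n
    unfolding eq by (rule tc_step[OF tr_add.hyps]) simp
  then show ?case using B by metis
qed

end


context prof begin

lemma L1_nonneg: "0 \<le> L1 f n"
  unfolding L1_def by (intro mult_nonneg_nonneg sum_nonneg) auto

lemma L1_step:
  assumes K: "0 \<le> K"
    and bp: "\<And>n i. i \<in> {1..n} \<Longrightarrow> 0 \<le> fp n i \<and> fp n i \<le> K"
    and bl: "\<And>n i. i \<in> {1..n} \<Longrightarrow> 0 \<le> fl n i \<and> fl n i \<le> K"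
    and lp: "L1 fp \<longlonglongrightarrow> 0" and ll: "L1 fl \<longlonglongrightarrow> 0"
  shows "L1 (\<lambda>n j. fp n j * psi s n (fl n) j) \<longlonglongrightarrow> 0"
proof (rule Lim_null_comparison)
  let ?g = "\<lambda>n. K * C * L1 fl n + K * ((1/real n) * (\<Sum>i=1..n. \<bar>(\<Sum>j=1..n. s n i j) - 1\<bar>)) + L1 fp n"
  show "?g \<longlonglongrightarrow> 0"
    using tendsto_add[OF tendsto_add[OF tendsto_mult_right_zero[OF ll, of "K * C"] tendsto_mult_right_zero[OF prof, of K]] lp]
    by (simp add: mult_ac)
  show "\<forall>\<^sub>F n in sequentially. norm (L1 (\<lambda>n j. fp n j * psi s n (fl n) j) n) \<le> ?g n"
  proof (intro always_eventually allI)
    fix n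
    have pw: "\<bar>fp n j * psi s n (fl n) j - 1\<bar> \<le>
        K * ((\<Sum>k=1..n. s n j k * \<bar>fl n k - 1\<bar>) + \<bar>(\<Sum>k=1..n. s n j k) - 1\<bar>) + \<bar>fp n j - 1\<bar>"
      if j: "j \<in> {1..n}" for j
    proof -
      have "psi s n (fl n) j - 1 = (\<Sum>k=1..n. s n j k * (fl n k - 1)) + ((\<Sum>k=1..n. s n j k) - 1)"
        unfolding psi_def by (simp add: sum_subtractf algebra_simps)
      then have "\<bar>psi s n (fl n) j - 1\<bar> \<le> \<bar>\<Sum>k=1..n. s n j k * (fl n k - 1)\<bar> + \<bar>(\<Sum>k=1..n. s n j k) - 1\<bar>"
        by simp
      also have "\<bar>\<Sum>k=1..n. s n j k * (fl n k - 1)\<bar> \<le> (\<Sum>k=1..n. \<bar>s n j k * (fl n k - 1)\<bar>)"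
        by (rule sum_abs)
      also have "\<dots> = (\<Sum>k=1..n. s n j k * \<bar>fl n k - 1\<bar>)"
        using s_nonneg j by (intro sum.cong refl) (simp add: abs_mult)
      finally have ps: "\<bar>psi s n (fl n) j - 1\<bar> \<le> (\<Sum>k=1..n. s n j k * \<bar>fl n k - 1\<bar>) + \<bar>(\<Sum>k=1..n. s n j k) - 1\<bar>"
        by simp
      have "fp n j * psi s n (fl n) j - 1 = fp n j * (psi s n (fl n) j - 1) + (fp n j - 1)"
        by (simp add: algebra_simps)
      then have "\<bar>fp n j * psi s n (fl n) j - 1\<bar> \<le> \<bar>fp n j\<bar> * \<bar>psi s n (fl n) j - 1\<bar> + \<bar>fp n j - 1\<bar>"
        by (simp add: abs_mult[symmetric])
      also have "\<dots> \<le> K * ((\<Sum>k=1..n. s n j k * \<bar>fl n k - 1\<bar>) + \<bar>(\<Sum>k=1..n. s n j k) - 1\<bar>) + \<bar>fp n j - 1\<bar>"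
        using bp[OF j] ps by (intro add_right_mono mult_mono) auto
      finally show ?thesis .
    qed
    have "(\<Sum>j=1..n. \<bar>fp n j * psi s n (fl n) j - 1\<bar>) \<le>
        (\<Sum>j=1..n. K * ((\<Sum>k=1..n. s n j k * \<bar>fl n k - 1\<bar>) + \<bar>(\<Sum>k=1..n. s n j k) - 1\<bar>) + \<bar>fp n j - 1\<bar>)"
      using pw by (rule sum_mono)
    also have "\<dots> = K * (\<Sum>j=1..n. \<Sum>k=1..n. s n j k * \<bar>fl n k - 1\<bar>) + K * (\<Sum>j=1..n. \<bar>(\<Sum>k=1..n. s n j k) - 1\<bar>)
        + (\<Sum>j=1..n. \<bar>fp n j - 1\<bar>)"
      by (simp add: sum.distrib sum_distrib_left distrib_left)
    also have "(\<Sum>j=1..n. \<Sum>k=1..n. s n j k * \<bar>fl n k - 1\<bar>) \<le> C * (\<Sum>k=1..n. \<bar>fl n k - 1\<bar>)"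
    proof -
      have "(\<Sum>j=1..n. \<Sum>k=1..n. s n j k * \<bar>fl n k - 1\<bar>) = (\<Sum>k=1..n. (\<Sum>j=1..n. s n k j) * \<bar>fl n k - 1\<bar>)"
        by (subst sum.swap) (auto simp: sum_distrib_right s_sym intro!: sum.cong)
      also have "\<dots> \<le> (\<Sum>k=1..n. C * \<bar>fl n k - 1\<bar>)"
        using s_row by (intro sum_mono mult_right_mono) auto
      finally show ?thesis by (simp add: sum_distrib_left)
    qed
    finally have "(\<Sum>j=1..n. \<bar>fp n j * psi s n (fl n) j - 1\<bar>) \<le> K * (C * (\<Sum>k=1..n. \<bar>fl n k - 1\<bar>))
        + K * (\<Sum>j=1..n. \<bar>(\<Sum>k=1..n. s n j k) - 1\<bar>) + (\<Sum>j=1..n. \<bar>fp n j - 1\<bar>)"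
      using K by (simp add: mult_left_mono)
    then have "(1 / real n) * (\<Sum>j=1..n. \<bar>fp n j * psi s n (fl n) j - 1\<bar>) \<le>
       (1 / real n) * (K * (C * (\<Sum>k=1..n. \<bar>fl n k - 1\<bar>))
        + K * (\<Sum>j=1..n. \<bar>(\<Sum>k=1..n. s n j k) - 1\<bar>) + (\<Sum>j=1..n. \<bar>fp n j - 1\<bar>))"
      by (rule mult_left_mono) simp
    also have "\<dots> = ?g n" unfolding L1_def by (simp add: algebra_simps)
    finally show "norm (L1 (\<lambda>n j. fp n j * psi s n (fl n) j) n) \<le> ?g n"
      using L1_nonneg unfolding L1_def by simp
  qed
qed

end


context prof begin

lemma limA:
  assumes "tr V E" and "0 \<le> K" and "\<And>u n i. i \<in> {1..n} \<Longrightarrow> 0 \<le> \<phi> u n i \<and> \<phi> u n i \<le> K"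
    and "\<And>u. u \<in> V \<Longrightarrow> L1 (\<phi> u) \<longlonglongrightarrow> 0"
  shows "(\<lambda>n. (1 / real n) * tc s n V E (\<lambda>_. 1) (\<lambda>u. \<phi> u n)) \<longlonglongrightarrow> 1"
  using assms
proof (induction arbitrary: \<phi> K rule: tr.induct)
  case (tr_single r)
  have L: "L1 (\<phi> r) \<longlonglongrightarrow> 0" using tr_single.prems(3) by simp
  have "(\<lambda>n. (1 / real n) * tc s n {r} {} (\<lambda>_. 1) (\<lambda>u. \<phi> u n) - 1) \<longlonglongrightarrow> 0"
  proof (rule Lim_null_comparison[OF _ L])
    show "\<forall>\<^sub>F n in sequentially. norm ((1 / real n) * tc s n {r} {} (\<lambda>_. 1) (\<lambda>u. \<phi> u n) - 1) \<le> L1 (\<phi> r) n"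
      using eventually_ge_at_top[of "1::nat"]
    proof eventually_elim
      case (elim n)
      have "(1 / real n) * tc s n {r} {} (\<lambda>_. 1) (\<lambda>u. \<phi> u n) - 1 = (1 / real n) * (\<Sum>k=1..n. \<phi> r n k - 1)"
        using elim by (simp add: tc_single sum_subtractf right_diff_distrib)
      also have "\<bar>\<dots>\<bar> \<le> (1 / real n) * (\<Sum>k=1..n. \<bar>\<phi> r n k - 1\<bar>)"
        by (simp add: abs_mult sum_abs divide_right_mono)
      finally show ?case unfolding L1_def by simp
    qed
  qed
  then show ?case by (rule LIM_zero_cancel)
next
  case (tr_add V E p l)
  define \<phi>' where "\<phi>' u n j = (if u = p then \<phi> p n j * psi s n (\<phi> l n) j else \<phi> u n j)" for u n j
  have eq: "(\<lambda>u. \<phi>' u n) = (\<lambda>u. \<phi> u n)(p := \<lambda>j. \<phi> p n j * psi s n (\<phi> l n) j)" for n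
    by (intro ext) (simp add: \<phi>'_def)
  have b': "0 \<le> \<phi>' u n i \<and> \<phi>' u n i \<le> K + K * (C * K)" if i: "i \<in> {1..n}" for u n i
  proof (cases "u = p")
    case True
    have ps: "0 \<le> psi s n (\<phi> l n) i \<and> psi s n (\<phi> l n) i \<le> C * K"
      using psi_bounds[OF tr_add.prems(1)] tr_add.prems(2) i by blast
    have ph: "0 \<le> \<phi> p n i \<and> \<phi> p n i \<le> K" using tr_add.prems(2) i by blast
    have "\<phi> p n i * psi s n (\<phi> l n) i \<le> K * (C * K)" using ps ph by (intro mult_mono) auto
    then show ?thesis using True ps ph tr_add.prems(1) C_nonneg by (simp add: \<phi>'_def)
  next
    case False
    have kk: "0 \<le> K * (C * K)" using tr_add.prems(1) C_nonneg by simp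
    then show ?thesis using tr_add.prems(2)[OF i, of u] False by (simp add: \<phi>'_def)
  qed
  have K': "0 \<le> K + K * (C * K)" using tr_add.prems(1) C_nonneg by simp
  have L': "L1 (\<phi>' u) \<longlonglongrightarrow> 0" if u: "u \<in> V" for u
  proof (cases "u = p")
    case True
    have "L1 (\<lambda>n j. \<phi> p n j * psi s n (\<phi> l n) j) \<longlonglongrightarrow> 0"
      by (rule L1_step[OF tr_add.prems(1)]) (use tr_add.prems(2,3) tr_add.hyps(2) in auto)
    moreover have "\<phi>' u = (\<lambda>n j. \<phi> p n j * psi s n (\<phi> l n) j)" using True by (intro ext) (simp add: \<phi>'_def)
    ultimately show ?thesis by simp
  next
    case False
    then have "\<phi>' u = \<phi> u" by (intro ext) (simp add: \<phi>'_def)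
    then show ?thesis using tr_add.prems(3) u by simp
  qed
  have "(\<lambda>n. (1 / real n) * tc s n V E (\<lambda>_. 1) (\<lambda>u. \<phi>' u n)) \<longlonglongrightarrow> 1"
    by (rule tr_add.IH[where K="K + K * (C * K)" and \<phi>=\<phi>']) (use K' b' L' in auto)
  moreover have "tc s n (insert l V) (insert {p,l} E) (\<lambda>_. 1) (\<lambda>u. \<phi> u n) = tc s n V E (\<lambda>_. 1) (\<lambda>u. \<phi>' u n)" for n
    unfolding eq by (rule tc_step[OF tr_add.hyps]) simp
  ultimately show ?case by simp
qed

lemma leafC:
  assumes T: "tr V E" and pV: "p \<in> V" and lV: "l \<notin> V" and uV: "u \<in> V"
    and K: "0 \<le> K" and b: "\<And>u n i. i \<in> {1..n} \<Longrightarrow> 0 \<le> \<phi> u n i \<and> \<phi> u n i \<le> K"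
  shows "\<exists>B. \<forall>n. tc s n (insert l V) (insert {p,l} E) (\<lambda>F. if F u = F l then 1 else 0) (\<lambda>u. \<phi> u n)
            \<le> B * \<epsilon> n * real n"
proof -
  have "\<exists>B. \<forall>n. tc s n V E (\<lambda>_. 1) (\<lambda>u. \<phi> u n) \<le> B * real n"
    by (rule boundB[OF T K]) (rule b)
  then obtain B where B: "\<And>n. tc s n V E (\<lambda>_. 1) (\<lambda>u. \<phi> u n) \<le> B * real n" by blast
  have ul: "u \<noteq> l" using uV lV by auto
  have "tc s n (insert l V) (insert {p,l} E) (\<lambda>F. if F u = F l then 1 else 0) (\<lambda>u. \<phi> u n)
            \<le> (K * B) * \<epsilon> n * real n" for n
  proof -
    let ?X = "\<lambda>g. wt s n E g * (\<Prod>u\<in>V. \<phi> u n (g u))"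
    have X0: "0 \<le> ?X g" if "g \<in> PiE V (\<lambda>_. {1..n})" for g
      using wt_nonneg[OF T that] b that
      by (intro mult_nonneg_nonneg prod_nonneg) (auto dest: PiE_mem)
    have "tc s n (insert l V) (insert {p,l} E) (\<lambda>F. if F u = F l then 1 else 0) (\<lambda>u. \<phi> u n)
       = (\<Sum>g\<in>PiE V (\<lambda>_. {1..n}). \<Sum>k=1..n. (if g u = k then 1 else 0) * s n (g p) k * \<phi> l n k * ?X g)"
      unfolding decomp[OF T pV lV] using ul by simp
    also have "\<dots> = (\<Sum>g\<in>PiE V (\<lambda>_. {1..n}). s n (g p) (g u) * \<phi> l n (g u) * ?X g)"
    proof (intro sum.cong refl)
      fix g assume g: "g \<in> PiE V (\<lambda>_. {1..n})"
      have "(\<Sum>k=1..n. (if g u = k then 1 else 0) * s n (g p) k * \<phi> l n k * ?X g)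
          = (\<Sum>k=1..n. if g u = k then s n (g p) k * \<phi> l n k * ?X g else 0)"
        by (intro sum.cong refl) simp
      also have "\<dots> = s n (g p) (g u) * \<phi> l n (g u) * ?X g" using PiE_mem[OF g uV] by simp
      finally show "(\<Sum>k=1..n. (if g u = k then 1 else 0) * s n (g p) k * \<phi> l n k * ?X g)
          = s n (g p) (g u) * \<phi> l n (g u) * ?X g" .
    qed
    also have "\<dots> \<le> (\<Sum>g\<in>PiE V (\<lambda>_. {1..n}). (\<epsilon> n * K) * ?X g)"
    proof (intro sum_mono mult_right_mono)
      fix g assume g: "g \<in> PiE V (\<lambda>_. {1..n})"
      have gu: "g u \<in> {1..n}" "g p \<in> {1..n}" using PiE_mem[OF g uV] PiE_mem[OF g pV] by auto
      show "s n (g p) (g u) * \<phi> l n (g u) \<le> \<epsilon> n * K"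
        using s_small[OF gu(2,1)] s_nonneg[OF gu(2,1)] b[OF gu(1)] eps_nonneg
        by (intro mult_mono) auto
      show "0 \<le> ?X g" using X0[OF g] .
    qed
    also have "\<dots> = (\<epsilon> n * K) * tc s n V E (\<lambda>_. 1) (\<lambda>u. \<phi> u n)"
      unfolding tc_def by (simp add: sum_distrib_left)
    also have "\<dots> \<le> (\<epsilon> n * K) * (B * real n)"
      using B[of n] eps_nonneg K by (intro mult_left_mono) auto
    finally show ?thesis by (simp add: mult_ac)
  qed
  then show ?thesis by blast
qed

lemma boundC:
  assumes "tr V E" and "0 \<le> K" and "\<And>u n i. i \<in> {1..n} \<Longrightarrow> 0 \<le> \<phi> u n i \<and> \<phi> u n i \<le> K"
    and "u \<in> V" "v \<in> V" "u \<noteq> v"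
  shows "\<exists>B. \<forall>n. tc s n V E (\<lambda>F. if F u = F v then 1 else 0) (\<lambda>u. \<phi> u n) \<le> B * \<epsilon> n * real n"
  using assms
proof (induction arbitrary: \<phi> K u v rule: tr.induct)
  case (tr_single r)
  then show ?case by simp
next
  case (tr_add V E p l)
  show ?case
  proof (cases "l = v")
    case True
    have "u \<in> V" using tr_add.prems True by auto
    show ?thesis unfolding True[symmetric]
      by (rule leafC[OF tr_add.hyps \<open>u \<in> V\<close> tr_add.prems(1)]) (rule tr_add.prems(2))
  next
    case lv: False
    show ?thesis
    proof (cases "l = u")
      case True
      have "v \<in> V" using tr_add.prems True by auto
      have "(\<lambda>F. if F u = F v then 1 else 0) = (\<lambda>F. if F v = F l then (1::real) else 0)"
        using True by (intro ext) auto
      show ?thesis unfolding \<open>(\<lambda>F. if F u = F v then 1 else 0) = (\<lambda>F. if F v = F l then (1::real) else 0)\<close>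
        by (rule leafC[OF tr_add.hyps \<open>v \<in> V\<close> tr_add.prems(1)]) (rule tr_add.prems(2))
    next
      case lu: False
      have uV: "u \<in> V" and vV: "v \<in> V" using tr_add.prems lu lv by auto
      define \<phi>' where "\<phi>' u n j = (if u = p then \<phi> p n j * psi s n (\<phi> l n) j else \<phi> u n j)" for u n j
      have eq: "(\<lambda>u. \<phi>' u n) = (\<lambda>u. \<phi> u n)(p := \<lambda>j. \<phi> p n j * psi s n (\<phi> l n) j)" for n
        by (intro ext) (simp add: \<phi>'_def)
      have b': "0 \<le> \<phi>' w n i \<and> \<phi>' w n i \<le> K + K * (C * K)" if i: "i \<in> {1..n}" for w n i
      proof (cases "w = p")
        case True
        have ps: "0 \<le> psi s n (\<phi> l n) i \<and> psi s n (\<phi> l n) i \<le> C * K"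
          using psi_bounds[OF tr_add.prems(1)] tr_add.prems(2) i by blast
        have ph: "0 \<le> \<phi> p n i \<and> \<phi> p n i \<le> K" using tr_add.prems(2) i by blast
        have "\<phi> p n i * psi s n (\<phi> l n) i \<le> K * (C * K)" using ps ph by (intro mult_mono) auto
        then show ?thesis using True ps ph tr_add.prems(1) C_nonneg by (simp add: \<phi>'_def)
      next
        case False
        have kk: "0 \<le> K * (C * K)" using tr_add.prems(1) C_nonneg by simp
        then show ?thesis using tr_add.prems(2)[OF i, of w] False by (simp add: \<phi>'_def)
      qed
      have K': "0 \<le> K + K * (C * K)" using tr_add.prems(1) C_nonneg by simp
      have "\<exists>B. \<forall>n. tc s n V E (\<lambda>F. if F u = F v then 1 else 0) (\<lambda>u. \<phi>' u n) \<le> B * \<epsilon> n * real n"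
        by (rule tr_add.IH[where K="K + K * (C * K)" and \<phi>=\<phi>']) (use K' b' uV vV tr_add.prems(5) in auto)
      moreover have "tc s n (insert l V) (insert {p,l} E) (\<lambda>F. if F u = F v then 1 else 0) (\<lambda>u. \<phi> u n)
          = tc s n V E (\<lambda>F. if F u = F v then 1 else 0) (\<lambda>u. \<phi>' u n)" for n
        unfolding eq by (rule tc_step[OF tr_add.hyps]) (use lu lv in simp)
      ultimately show ?thesis by simp
    qed
  qed
qed

end


theorem lemma3p2:
  fixes M :: "nat \<Rightarrow> 'a measure"
    and w :: "nat \<Rightarrow> nat \<Rightarrow> nat \<Rightarrow> 'a \<Rightarrow> complex"
    and \<eta> :: "nat \<Rightarrow> real"
    and C :: real
    and V :: "'v set" and E :: "'v set set"
  assumes prob: "\<And>n. prob_space (M n)"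
    and meas: "\<And>n i j. i \<in> {1..n} \<Longrightarrow> j \<in> {1..n} \<Longrightarrow> w n i j \<in> borel_measurable (M n)"
    and herm: "\<And>n i j x. i \<in> {1..n} \<Longrightarrow> j \<in> {1..n} \<Longrightarrow> x \<in> space (M n) \<Longrightarrow>
                  w n j i x = cnj (w n i j x)"
    and indep: "\<And>n. prob_space.indep_vars (M n) (\<lambda>_. borel) (\<lambda>(i, j). w n i j)
                  {(i, j). 1 \<le> i \<and> i \<le> j \<and> j \<le> n}"
    and mean0: "\<And>n i j. i \<in> {1..n} \<Longrightarrow> j \<in> {1..n} \<Longrightarrow> (\<integral>x. w n i j x \<partial>M n) = 0"
    and eta_pos: "\<And>n. \<eta> n > 0"
    and eta_lim: "\<eta> \<longlonglongrightarrow> 0"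
    and bound: "\<And>n i j x. i \<in> {1..n} \<Longrightarrow> j \<in> {1..n} \<Longrightarrow> x \<in> space (M n) \<Longrightarrow>
                  cmod (w n i j x) \<le> \<eta> n"
    and C_nonneg: "C \<ge> 0"
    and rowsum: "\<And>n i. i \<in> {1..n} \<Longrightarrow> (\<Sum>j=1..n. cvar (M n) (w n i j)) \<le> C"
    and profile: "(\<lambda>n. (1 / real n) * (\<Sum>i=1..n. \<bar>\<Sum>j=1..n. cvar (M n) (w n i j) - 1 / real n\<bar>))
                    \<longlonglongrightarrow> 0"
    and tree: "is_tree V E"
  shows "(\<lambda>n. (1 / real n) * (\<Sum>F\<in>injs V n. Pw E (\<lambda>i j. cvar (M n) (w n i j)) F)) \<longlonglongrightarrow> 1"
proof -
  define s where "s = (\<lambda>n i j. cvar (M n) (w n i j))"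
  define \<epsilon> where "\<epsilon> = (\<lambda>n. (\<eta> n)^2)"
  have cv: "s n i j = (\<integral>x. (cmod (w n i j x))\<^sup>2 \<partial>M n)" if "i \<in> {1..n}" "j \<in> {1..n}" for n i j
    using mean0[OF that] by (simp add: s_def cvar_def)
  have s_nonneg: "0 \<le> s n i j" for n i j
    unfolding s_def cvar_def by (rule Bochner_Integration.integral_nonneg) simp
  have s_sym: "s n i j = s n j i" if ij: "i \<in> {1..n}" "j \<in> {1..n}" for n i j
  proof -
    have "(\<integral>x. (cmod (w n j i x))\<^sup>2 \<partial>M n) = (\<integral>x. (cmod (w n i j x))\<^sup>2 \<partial>M n)"
      by (rule Bochner_Integration.integral_cong[OF refl]) (simp add: herm[OF ij])
    then show ?thesis using cv[OF ij] cv[OF ij(2,1)] by simp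
  qed
  have s_small: "s n i j \<le> \<epsilon> n" if ij: "i \<in> {1..n}" "j \<in> {1..n}" for n i j
  proof -
    interpret P: prob_space "M n" by (rule prob)
    show ?thesis
    proof (cases "integrable (M n) (\<lambda>x. (cmod (w n i j x))\<^sup>2)")
      case True
      have "(\<integral>x. (cmod (w n i j x))\<^sup>2 \<partial>M n) \<le> (\<integral>x. (\<eta> n)\<^sup>2 \<partial>M n)"
      proof (rule integral_mono[OF True P.integrable_const])
        fix x assume "x \<in> space (M n)"
        then show "(cmod (w n i j x))\<^sup>2 \<le> (\<eta> n)\<^sup>2"
          using bound[OF ij] by (intro power_mono) auto
      qed
      also have "\<dots> = (\<eta> n)\<^sup>2" using P.prob_space by simp
      finally show ?thesis using cv[OF ij] by (simp add: \<epsilon>_def)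
    next
      case False
      then show ?thesis using cv[OF ij] by (simp add: \<epsilon>_def not_integrable_integral_eq)
    qed
  qed
  have rowC: "(\<Sum>j=1..n. s n i j) \<le> C" if "i \<in> {1..n}" for n i
    using rowsum[OF that] by (simp add: s_def)
  have prof_eq: "(\<Sum>i=1..n. \<bar>\<Sum>j=1..n. cvar (M n) (w n i j) - 1 / real n\<bar>) = (\<Sum>i=1..n. \<bar>(\<Sum>j=1..n. s n i j) - 1\<bar>)" for n
  proof (intro sum.cong refl)
    fix i assume "i \<in> {1..n}"
    then have "n \<ge> 1" by simp
    then show "\<bar>\<Sum>j=1..n. cvar (M n) (w n i j) - 1 / real n\<bar> = \<bar>(\<Sum>j=1..n. s n i j) - 1\<bar>"
      by (simp add: sum_subtractf s_def)
  qed
  have prof': "(\<lambda>n. (1/real n) * (\<Sum>i=1..n. \<bar>(\<Sum>j=1..n. s n i j) - 1\<bar>)) \<longlonglongrightarrow> 0"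
    using profile unfolding prof_eq .
  interpret prof s C \<epsilon>
    by unfold_locales (use s_nonneg s_sym rowC s_small C_nonneg prof' in \<open>auto simp: \<epsilon>_def\<close>)
  have T: "tr V E" by (rule tree_to_tr[OF tree])
  have finV: "finite V" using tr_props[OF T] by blast
  define tot where "tot n = (\<Sum>F\<in>PiE V (\<lambda>_. {1..n}). wt s n E F)" for n
  have tot_tc: "tc s n V E (\<lambda>_. 1) (\<lambda>u i. 1) = tot n" for n
    unfolding tc_def tot_def by simp
  have A: "(\<lambda>n. (1 / real n) * tot n) \<longlonglongrightarrow> 1"
  proof -
    have "(\<lambda>n. (1 / real n) * tc s n V E (\<lambda>_. 1) (\<lambda>u. (\<lambda>u n i. 1) u n)) \<longlonglongrightarrow> 1"
    proof (rule limA[OF T, of 1])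
      have "L1 (\<lambda>n i. 1) = (\<lambda>n. 0)" by (rule ext) (simp add: L1_def)
      then show "\<And>u. u \<in> V \<Longrightarrow> L1 (\<lambda>n i. 1) \<longlonglongrightarrow> 0" by simp
    qed auto
    then show ?thesis unfolding tot_tc by simp
  qed
  define D where "D = {d. fst d \<in> V \<and> snd d \<in> V \<and> fst d \<noteq> snd d}"
  have finD: "finite D" unfolding D_def
    by (rule finite_subset[of _ "V \<times> V"]) (use finV in auto)
  have "\<forall>d\<in>D. \<exists>B. \<forall>n. tc s n V E (\<lambda>F. if F (fst d) = F (snd d) then 1 else 0) (\<lambda>u. (\<lambda>u n i. 1) u n) \<le> B * \<epsilon> n * real n"
  proof
    fix d assume "d \<in> D"
    then show "\<exists>B. \<forall>n. tc s n V E (\<lambda>F. if F (fst d) = F (snd d) then 1 else 0) (\<lambda>u. (\<lambda>u n i. 1) u n) \<le> B * \<epsilon> n * real n"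
      unfolding D_def by (intro boundC[OF T, of 1]) auto
  qed
  then have "\<exists>f. \<forall>d\<in>D. \<forall>n. tc s n V E (\<lambda>F. if F (fst d) = F (snd d) then 1 else 0) (\<lambda>u i. 1) \<le> f d * \<epsilon> n * real n"
    by (rule bchoice)
  then obtain Bf where Bf0: "\<forall>d\<in>D. \<forall>n. tc s n V E (\<lambda>F. if F (fst d) = F (snd d) then 1 else 0) (\<lambda>u i. 1) \<le> Bf d * \<epsilon> n * real n"
    by blast
  have Bf: "\<And>d n. d \<in> D \<Longrightarrow> tc s n V E (\<lambda>F. if F (fst d) = F (snd d) then 1 else 0) (\<lambda>u i. 1) \<le> Bf d * \<epsilon> n * real n"
    using Bf0 by blast
  define N where "N n = (\<Sum>F\<in>PiE V (\<lambda>_. {1..n}). if inj_on F V then 0 else wt s n E F)" for n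
  have N0: "0 \<le> N n" for n
    unfolding N_def using wt_nonneg[OF T] by (intro sum_nonneg) auto
  have NB: "N n \<le> (\<Sum>d\<in>D. Bf d) * \<epsilon> n * real n" for n
  proof -
    have "N n \<le> (\<Sum>F\<in>PiE V (\<lambda>_. {1..n}). \<Sum>d\<in>D. (if F (fst d) = F (snd d) then 1 else 0) * wt s n E F)"
      unfolding N_def
    proof (intro sum_mono)
      fix F assume F: "F \<in> PiE V (\<lambda>_. {1..n})"
      have nn: "\<And>d. 0 \<le> (if F (fst d) = F (snd d) then 1 else 0) * wt s n E F"
        using wt_nonneg[OF T F] by simp
      show "(if inj_on F V then 0 else wt s n E F) \<le> (\<Sum>d\<in>D. (if F (fst d) = F (snd d) then 1 else 0) * wt s n E F)"
      proof (cases "inj_on F V")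
        case True then show ?thesis using nn by (simp add: sum_nonneg)
      next
        case False
        then obtain u v where uv: "u \<in> V" "v \<in> V" "u \<noteq> v" "F u = F v" unfolding inj_on_def by blast
        then have d: "(u, v) \<in> D" unfolding D_def by simp
        have "wt s n E F = (\<lambda>d. (if F (fst d) = F (snd d) then 1 else 0) * wt s n E F) (u, v)"
          using uv by simp
        also have "\<dots> \<le> (\<Sum>d\<in>D. (if F (fst d) = F (snd d) then 1 else 0) * wt s n E F)"
          by (rule member_le_sum[OF d]) (use nn finD in auto)
        finally show ?thesis using False by simp
      qed
    qed
    also have "\<dots> = (\<Sum>d\<in>D. tc s n V E (\<lambda>F. if F (fst d) = F (snd d) then 1 else 0) (\<lambda>u i. 1))"
      unfolding tc_def by (subst sum.swap) simp
    also have "\<dots> \<le> (\<Sum>d\<in>D. Bf d * \<epsilon> n * real n)"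
      by (intro sum_mono Bf)
    also have "\<dots> = (\<Sum>d\<in>D. Bf d) * \<epsilon> n * real n" by (simp add: sum_distrib_right)
    finally show ?thesis .
  qed
  have epsl: "\<epsilon> \<longlonglongrightarrow> 0" unfolding \<epsilon>_def using tendsto_power[OF eta_lim, of 2] by simp
  have Nl: "(\<lambda>n. (1 / real n) * N n) \<longlonglongrightarrow> 0"
  proof (rule Lim_null_comparison)
    show "(\<lambda>n. (\<Sum>d\<in>D. Bf d) * \<epsilon> n) \<longlonglongrightarrow> 0" using tendsto_mult_right_zero[OF epsl] by simp
    show "\<forall>\<^sub>F n in sequentially. norm ((1 / real n) * N n) \<le> (\<Sum>d\<in>D. Bf d) * \<epsilon> n"
      using eventually_ge_at_top[of "1::nat"]
    proof eventually_elim
      case (elim n)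
      have "(1 / real n) * N n \<le> (1 / real n) * ((\<Sum>d\<in>D. Bf d) * \<epsilon> n * real n)"
        using NB[of n] by (intro mult_left_mono) auto
      also have "\<dots> = (\<Sum>d\<in>D. Bf d) * \<epsilon> n" using elim by simp
      finally show ?case using N0[of n] by simp
    qed
  qed
  have split: "(\<Sum>F\<in>injs V n. Pw E (\<lambda>i j. cvar (M n) (w n i j)) F) = tot n - N n" for n
  proof -
    have Pw_wt: "Pw E (\<lambda>i j. cvar (M n) (w n i j)) F = wt s n E F" for F
      unfolding Pw_def wt_def s_def by simp
    have "injs V n = {F \<in> PiE V (\<lambda>_. {1..n}). inj_on F V}" unfolding injs_def by auto
    then have "(\<Sum>F\<in>injs V n. Pw E (\<lambda>i j. cvar (M n) (w n i j)) F)
        = (\<Sum>F\<in>PiE V (\<lambda>_. {1..n}). if inj_on F V then wt s n E F else 0)"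
      using finV by (simp add: sum.inter_filter Pw_wt finite_PiE)
    also have "\<dots> = tot n - N n" unfolding tot_def N_def
      by (simp add: sum_subtractf[symmetric] if_distrib cong: if_cong)
    finally show ?thesis .
  qed
  have "(\<lambda>n. (1 / real n) * tot n - (1 / real n) * N n) \<longlonglongrightarrow> 1 - 0"
    by (rule tendsto_diff[OF A Nl])
  then show ?thesis unfolding split by (simp add: right_diff_distrib)
qed


end
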